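(* Let $V$ be a finite set with $n=|V|$ elements and let $p_v\in[1/n^2,1]$ for each $v\in V$. Define $p=\frac1n\min_{v\in V}p_v$, and for each $v\in V$ define $\bar p_v=\min\{(1+\frac1n)p_v,1\}$, $t_v=\lceil p_v/p\rceil$ and $q_v=1-(1-p)^{t_v}$. Then for every $v\in V$, $$p_v\left(1-\tfrac1e\right)\le q_v\le \bar p_v\le p_v\left(1+\tfrac1n\right).$$ *)

theory Defs
  imports "HOL-Analysis.Analysis"
begin

end

theory Submission
  imports Defs
begin

lemma exp_cvx: "convex_on UNIV (\<lambda>x::real. exp x)"
  by (intro convex_on_realI[where f' = "\<lambda>x. exp x"])
     (auto intro!: derivative_eq_intros)

lemma one_minus_exp_bound:
  fixes x :: real assumes "0 \<le> x" "x \<le> 1"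
  shows "x * (1 - 1 / exp 1) \<le> 1 - exp (- x)"
proof -
  have "exp ((1 - x) *\<^sub>R 0 + x *\<^sub>R (-1)) \<le> (1 - x) * exp 0 + x * exp (-1)"
    using assms by (intro convex_onD[OF exp_cvx]) auto
  then have "exp (-x) \<le> 1 - x + x * exp (-1)" by simp
  then show ?thesis by (simp add: exp_minus field_simps)
qed

theorem lemma1:
  fixes V :: "'a set" and pv :: "'a \<Rightarrow> real" and n :: nat and p :: real
  assumes "finite V"
    and "n = card V"
    and "\<And>v. v \<in> V \<Longrightarrow> 1 / (real n)^2 \<le> pv v \<and> pv v \<le> 1"
    and "p = (1 / real n) * Min (pv ` V)"
    and "v \<in> V"
  shows "pv v * (1 - 1 / exp 1) \<le> 1 - (1 - p) ^ nat \<lceil>pv v / p\<rceil>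
       \<and> 1 - (1 - p) ^ nat \<lceil>pv v / p\<rceil> \<le> min ((1 + 1 / real n) * pv v) 1
       \<and> min ((1 + 1 / real n) * pv v) 1 \<le> pv v * (1 + 1 / real n)"
proof -
  define m where "m = Min (pv ` V)"
  have "n > 0" using assms(1,2,5) card_gt_0_iff by blast
  then have n1: "real n \<ge> 1" by simp
  have mV: "m \<in> pv ` V" unfolding m_def using assms(1,5) by (intro Min_in) auto
  have mle: "m \<le> pv v" unfolding m_def using assms(1,5) by auto
  obtain w where w: "w \<in> V" "m = pv w" using mV by blast
  have "1 / (real n)^2 > 0" using n1 by simp
  then have mpos: "m > 0" using w assms(3)[of w] by linarith
  have m1: "m \<le> 1" using mV assms(3) by auto
  have pdef: "p = m / real n" using assms(4) m_def by simp
  have ppos: "p > 0" using pdef mpos n1 by simp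
  have "m / real n \<le> m" using mpos n1 by (simp add: divide_le_eq)
  then have ple1: "p \<le> 1" using pdef m1 by linarith
  have ple: "p \<le> pv v / real n" using pdef mle n1 by (simp add: divide_right_mono)
  have pv0: "pv v > 0" using mle mpos by simp
  have pv1: "pv v \<le> 1" using assms(3,5) by simp
  define t where "t = nat \<lceil>pv v / p\<rceil>"
  have tge: "real t \<ge> pv v / p" unfolding t_def by linarith
  have "pv v / p > 0" using pv0 ppos by simp
  then have "\<lceil>pv v / p\<rceil> \<ge> 0" by linarith
  then have "real t = of_int \<lceil>pv v / p\<rceil>" unfolding t_def by simp
  then have tlt: "real t < pv v / p + 1" using ceiling_correct[of "pv v / p"] by linarith
  have pt: "p * real t \<ge> pv v" using tge ppos by (simp add: field_simps)
  have pt2: "p * real t < pv v + p" using tlt ppos by (simp add: field_simps)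
  have A: "(1 - p) ^ t \<le> exp (- pv v)"
  proof -
    have "1 - p \<le> exp (-p)" using exp_ge_add_one_self[of "-p"] by simp
    then have "(1 - p) ^ t \<le> exp (-p) ^ t"
      using ple1 by (intro power_mono) auto
    also have "\<dots> = exp (- (p * real t))"
      by (metis exp_of_nat_mult mult.commute mult_minus_right)
    also have "\<dots> \<le> exp (- pv v)" using pt by simp
    finally show ?thesis .
  qed
  have c1: "pv v * (1 - 1 / exp 1) \<le> 1 - (1 - p) ^ t"
    using one_minus_exp_bound[of "pv v"] pv0 pv1 A by linarith
  have B: "1 - real t * p \<le> (1 - p) ^ t"
    using Bernoulli_inequality[of "-p" t] ppos ple1 by simp
  have C: "(1 - p) ^ t \<ge> 0" using ple1 by simp
  have c2: "1 - (1 - p) ^ t \<le> min ((1 + 1 / real n) * pv v) 1"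
  proof -
    have "1 - (1 - p) ^ t \<le> pv v + p" using B pt2 by (simp add: mult.commute)
    also have "\<dots> \<le> (1 + 1 / real n) * pv v" using ple by (simp add: algebra_simps)
    finally show ?thesis using C by simp
  qed
  show ?thesis using c1 c2 unfolding t_def by (simp add: mult.commute)
qed

end
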